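(* For all $x\in[0,1]$, $$\arcsin x \le \frac{\frac{\pi}{\pi-2}\,x}{\frac{2}{\pi-2}+\sqrt{1-x^2}},$$ with equality at both endpoints $x=0$ and $x=1$. *)

theory Defs
  imports Complex_Main
begin

end

theory Submission
  imports Defs "HOL-Analysis.Analysis"
begin

lemma pn_step:
  fixes h h' :: "real \<Rightarrow> real" and b :: real
  assumes b: "b \<ge> 0"
    and der: "\<And>t. (h has_real_derivative h' t) (at t)"
    and h0: "h 0 \<ge> 0" and hb: "h b \<le> 0"
    and pn: "\<exists>c. 0 \<le> c \<and> c \<le> b \<and> (\<forall>t. 0 \<le> t \<and> t \<le> c \<longrightarrow> h' t \<ge> 0)
                 \<and> (\<forall>t. c \<le> t \<and> t \<le> b \<longrightarrow> h' t \<le> 0)"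
  shows "\<exists>d. 0 \<le> d \<and> d \<le> b \<and> (\<forall>t. 0 \<le> t \<and> t \<le> d \<longrightarrow> h t \<ge> 0)
                 \<and> (\<forall>t. d \<le> t \<and> t \<le> b \<longrightarrow> h t \<le> 0)"
proof -
  obtain c where c: "0 \<le> c" "c \<le> b" "\<forall>t. 0 \<le> t \<and> t \<le> c \<longrightarrow> h' t \<ge> 0"
    "\<forall>t. c \<le> t \<and> t \<le> b \<longrightarrow> h' t \<le> 0" using pn by blast
  have inc: "h x \<le> h y" if "0 \<le> x" "x \<le> y" "y \<le> c" for x y
    by (rule deriv_nonneg_imp_mono[of x y h h']) (use der c that in auto)
  have dec: "h y \<le> h x" if "c \<le> x" "x \<le> y" "y \<le> b" for x y
  proof -
    have "(\<lambda>t. - h t) x \<le> (\<lambda>t. - h t) y"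
      by (rule deriv_nonneg_imp_mono[of x y _ "\<lambda>t. - h' t"])
         (use der c that in \<open>auto intro: derivative_eq_intros\<close>)
    then show ?thesis by simp
  qed
  have hc: "h c \<ge> 0" using inc[of 0 c] c h0 by auto
  have cont: "continuous_on {c..b} h"
    by (meson DERIV_isCont continuous_at_imp_continuous_on der)
  obtain d where d: "c \<le> d" "d \<le> b" "h d = 0"
    using IVT2'[of h b 0 c, OF hb hc c(2) cont] by auto
  show ?thesis
  proof (intro exI[of _ d] conjI allI impI)
    show "0 \<le> d" using c d by auto
    show "d \<le> b" by fact
    fix t assume t: "0 \<le> t \<and> t \<le> d"
    show "h t \<ge> 0"
    proof (cases "t \<le> c")
      case True then show ?thesis using inc[of 0 t] t h0 by auto
    next
      case False then show ?thesis using dec[of t d] t d by auto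
    qed
  next
    fix t assume t: "d \<le> t \<and> t \<le> b"
    then show "h t \<le> 0" using dec[of d t] d c by auto
  qed
qed

definition "f0 t = pi * sin t - 2 * t - (pi - 2) * t * cos t"
definition "f1 t = 2 * cos t - 2 + (pi - 2) * t * sin t"
definition "f2 t = (pi - 4) * sin t + (pi - 2) * t * cos t"
definition "f3 t = (2 * pi - 6) * cos t - (pi - 2) * t * sin t"
definition "f4 t = - (3 * pi - 8) * sin t - (pi - 2) * t * cos t"

lemma d0: "(f0 has_real_derivative f1 t) (at t)"
  unfolding f0_def[abs_def] f1_def
  by (auto intro!: derivative_eq_intros simp: algebra_simps)
lemma d1: "(f1 has_real_derivative f2 t) (at t)"
  unfolding f1_def[abs_def] f2_def
  by (auto intro!: derivative_eq_intros simp: algebra_simps)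
lemma d2: "(f2 has_real_derivative f3 t) (at t)"
  unfolding f2_def[abs_def] f3_def
  by (auto intro!: derivative_eq_intros simp: algebra_simps)
lemma d3: "(f3 has_real_derivative f4 t) (at t)"
  unfolding f3_def[abs_def] f4_def
  by (auto intro!: derivative_eq_intros simp: algebra_simps)

lemma pn4: "\<exists>c. 0 \<le> c \<and> c \<le> pi/2 \<and> (\<forall>t. 0 \<le> t \<and> t \<le> c \<longrightarrow> f4 t \<ge> 0)
                 \<and> (\<forall>t. c \<le> t \<and> t \<le> pi/2 \<longrightarrow> f4 t \<le> 0)"
proof (intro exI[of _ 0] conjI allI impI)
  fix t :: real assume t: "0 \<le> t \<and> t \<le> 0"
  then have "t = 0" by simp
  then show "f4 t \<ge> 0" by (simp add: f4_def)
next
  fix t :: real assume t: "0 \<le> t \<and> t \<le> pi/2"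
  have s: "sin t \<ge> 0" using t by (intro sin_ge_zero) auto
  have c: "cos t \<ge> 0" using t by (intro cos_ge_zero) auto
  have "(3 * pi - 8) * sin t \<ge> 0" using s pi_gt3 by simp
  moreover have "(pi - 2) * t * cos t \<ge> 0" using c t pi_gt3 by simp
  ultimately show "f4 t \<le> 0" unfolding f4_def by (simp add: algebra_simps)
qed auto

lemma pn3: "\<exists>c. 0 \<le> c \<and> c \<le> pi/2 \<and> (\<forall>t. 0 \<le> t \<and> t \<le> c \<longrightarrow> f3 t \<ge> 0)
                 \<and> (\<forall>t. c \<le> t \<and> t \<le> pi/2 \<longrightarrow> f3 t \<le> 0)"
  by (rule pn_step[OF _ d3 _ _ pn4]) (use pi_gt3 in \<open>auto simp: f3_def\<close>)

lemma pn2: "\<exists>c. 0 \<le> c \<and> c \<le> pi/2 \<and> (\<forall>t. 0 \<le> t \<and> t \<le> c \<longrightarrow> f2 t \<ge> 0)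
                 \<and> (\<forall>t. c \<le> t \<and> t \<le> pi/2 \<longrightarrow> f2 t \<le> 0)"
  by (rule pn_step[OF _ d2 _ _ pn3]) (use pi_gt3 pi_less_4 in \<open>auto simp: f2_def\<close>)

lemma pn1: "\<exists>c. 0 \<le> c \<and> c \<le> pi/2 \<and> (\<forall>t. 0 \<le> t \<and> t \<le> c \<longrightarrow> f1 t \<ge> 0)
                 \<and> (\<forall>t. c \<le> t \<and> t \<le> pi/2 \<longrightarrow> f1 t \<le> 0)"
proof (rule pn_step[OF _ d1 _ _ pn2])
  have "(pi - 2) * pi \<le> 4"
  proof -
    have "(pi - 2) * pi \<le> (pi - 2) * 3.2" using pi_approx pi_gt3 by (intro mult_left_mono) auto
    also have "\<dots> \<le> 4" using pi_approx by simp
    finally show ?thesis .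
  qed
  then show "f1 (pi/2) \<le> 0" by (simp add: f1_def)
qed (use pi_gt3 in \<open>auto simp: f1_def\<close>)

lemma f0_nonneg:
  assumes "0 \<le> t" "t \<le> pi/2" shows "f0 t \<ge> 0"
proof -
  obtain c where c: "0 \<le> c" "c \<le> pi/2" "\<forall>t. 0 \<le> t \<and> t \<le> c \<longrightarrow> f1 t \<ge> 0"
    "\<forall>t. c \<le> t \<and> t \<le> pi/2 \<longrightarrow> f1 t \<le> 0" using pn1 by blast
  show ?thesis
  proof (cases "t \<le> c")
    case True
    have "f0 0 \<le> f0 t"
      by (rule deriv_nonneg_imp_mono[of 0 t f0 f1]) (use d0 c True assms in auto)
    then show ?thesis by (simp add: f0_def)
  next
    case False
    have "(\<lambda>t. - f0 t) t \<le> (\<lambda>t. - f0 t) (pi/2)"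
      by (rule deriv_nonneg_imp_mono[of t "pi/2" _ "\<lambda>t. - f1 t"])
         (use d0 c False assms in \<open>auto intro: derivative_eq_intros\<close>)
    then show ?thesis by (simp add: f0_def)
  qed
qed

theorem mainTheorem1:
  shows "(\<forall>x::real. 0 \<le> x \<and> x \<le> 1 \<longrightarrow>
            arcsin x \<le> (pi / (pi - 2) * x) / (2 / (pi - 2) + sqrt (1 - x\<^sup>2)))
       \<and> arcsin 0 = (pi / (pi - 2) * 0) / (2 / (pi - 2) + sqrt (1 - 0\<^sup>2))
       \<and> arcsin 1 = (pi / (pi - 2) * 1) / (2 / (pi - 2) + sqrt (1 - 1\<^sup>2))"
proof (intro conjI allI impI)
  fix x :: real assume x: "0 \<le> x \<and> x \<le> 1"
  define t where "t = arcsin x"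
  have t0: "0 \<le> t" using x by (simp add: t_def arcsin_nonneg)
  have t1: "t \<le> pi/2" using x arcsin_bounded[of x] by (simp add: t_def)
  have st: "sin t = x" using x by (simp add: t_def)
  have ct: "cos t = sqrt (1 - x\<^sup>2)" using x by (simp add: t_def cos_arcsin)
  have cpos: "cos t \<ge> 0" using t0 t1 by (intro cos_ge_zero) auto
  have pg: "pi - 2 > 0" using pi_gt3 by simp
  have key: "t * (2 + (pi - 2) * cos t) \<le> pi * x"
    using f0_nonneg[OF t0 t1] st by (simp add: f0_def algebra_simps)
  have den: "2 + (pi - 2) * cos t > 0" using pg cpos by (simp add: add_pos_nonneg)
  have "(pi / (pi - 2) * x) / (2 / (pi - 2) + cos t) = pi * x / (2 + (pi - 2) * cos t)"
  proof -
    have "2 / (pi - 2) + cos t = (2 + (pi - 2) * cos t) / (pi - 2)"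
      using pg by (simp add: field_simps)
    then show ?thesis using pg den by simp
  qed
  moreover have "t \<le> pi * x / (2 + (pi - 2) * cos t)"
    using key den by (simp add: pos_le_divide_eq)
  ultimately have "t \<le> (pi / (pi - 2) * x) / (2 / (pi - 2) + cos t)" by linarith
  then show "arcsin x \<le> (pi / (pi - 2) * x) / (2 / (pi - 2) + sqrt (1 - x\<^sup>2))"
    using ct unfolding t_def by simp
next
  show "arcsin 0 = (pi / (pi - 2) * 0) / (2 / (pi - 2) + sqrt (1 - 0\<^sup>2))" by simp
next
  have "pi - 2 \<noteq> 0" using pi_gt3 by simp
  then show "arcsin 1 = (pi / (pi - 2) * 1) / (2 / (pi - 2) + sqrt (1 - 1\<^sup>2))" by simp
qed

end
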